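(* Consider the greedy algorithm (described in the context) run on a finite principal left ideal ring $R$ with a respectful order $<$, an ordered basis $B$ of $R^n$ and a left multiplicative property $P$ on $R^n$, producing nested codes $C_0\subseteq C_1\subseteq\dots\subseteq C_n$. Then for every $i\in\{1,\dots,n\}$, every vector $x\in V_i\setminus V_{i-1}$ such that $P[\gamma x+c]$ is true for all $\gamma\in\Gamma$ and all $c\in C_i$ already lies in $C_i$.
   Context: $R$ is a finite principal left ideal ring with unit group $R^\ast$; codes are left submodules of $R^n$. A property $P:R^n\to\{\text{true},\text{false}\}$ is left multiplicative if $P[ux]=P[x]$ for all $u\in R^\ast$, $x\in R^n$. A total order $<$ on $R$ is respectful if for all nonzero $x,y\in R$ with $Rx\supsetneq Ry$ there is $\alpha\in R^\ast$ with $\alpha x<uy$ for all $u\in R^\ast$. Fix an ordered basis $B=(b_1,\dots,b_n)$ of the free left module $R^n$; put $V_0=\{0\}$ and $V_i=Rb_1+\dots+Rb_i$. The lexicographic order on $R^n$: if $x\in V_{i-1}$ and $y\in V_i\setminus V_{i-1}$ then $x<y$; if $x\ne y$ both lie in the level set $V_i\setminus V_{i-1}$, write $x=\sum_{j\le i}x_jb_j$, $y=\sum_{j\le i}y_jb_j$, let $k$ be the largest index with $x_k\ne y_k$, and set $x<y$ iff $x_k<y_k$ in $R$. Fix a set $\Gamma\subseteq R$ containing one generator of each nonzero left ideal of $R$. Greedy algorithm: $C_0=\{0\}$; for $i=1,\dots,n$, let $a_i$ be the smallest vector of $V_i\setminus V_{i-1}$ (if any) such that $P[\gamma a_i+c]$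 is true for all $\gamma\in\Gamma$ and all $c\in C_{i-1}$; if such $a_i$ exists set $C_i=Ra_i+C_{i-1}$, otherwise $C_i=C_{i-1}$. The output $C_n$ is the lexicode $C(<,B,P)$. *)

theory Defs
  imports Main
begin

definition units :: "'a::ring_1 set" where
  "units = {u. \<exists>v. u * v = 1 \<and> v * u = 1}"

definition left_ideal :: "'a::ring_1 set \<Rightarrow> bool" where
  "left_ideal I \<longleftrightarrow> 0 \<in> I \<and> (\<forall>x\<in>I. \<forall>y\<in>I. x + y \<in> I) \<and> (\<forall>r. \<forall>x\<in>I. r * x \<in> I)"

definition lprin :: "'a::ring_1 \<Rightarrow> 'a set" where
  "lprin g = {r * g | r. True}"

definition principal_left_ideal_ring :: "'a::ring_1 itself \<Rightarrow> bool" where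
  "principal_left_ideal_ring _ \<longleftrightarrow> (\<forall>I::'a set. left_ideal I \<longrightarrow> (\<exists>g. I = lprin g))"

definition generator_system :: "'a::ring_1 set \<Rightarrow> bool" where
  "generator_system \<Gamma> \<longleftrightarrow> (\<forall>\<gamma>\<in>\<Gamma>. \<gamma> \<noteq> 0) \<and>
     (\<forall>I. left_ideal I \<and> I \<noteq> {0} \<longrightarrow> (\<exists>!\<gamma>. \<gamma> \<in> \<Gamma> \<and> lprin \<gamma> = I))"

definition strict_total_order :: "('a \<Rightarrow> 'a \<Rightarrow> bool) \<Rightarrow> bool" where
  "strict_total_order lt \<longleftrightarrow> (\<forall>x. \<not> lt x x) \<and>
     (\<forall>x y z. lt x y \<longrightarrow> lt y z \<longrightarrow> lt x z) \<and>
     (\<forall>x y. x \<noteq> y \<longrightarrow> lt x y \<or> lt y x)"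

definition respectful :: "('a::ring_1 \<Rightarrow> 'a \<Rightarrow> bool) \<Rightarrow> bool" where
  "respectful lt \<longleftrightarrow> strict_total_order lt \<and>
     (\<forall>x y. x \<noteq> 0 \<longrightarrow> y \<noteq> 0 \<longrightarrow> lprin y \<subset> lprin x \<longrightarrow>
        (\<exists>\<alpha>\<in>units. \<forall>u\<in>units. lt (\<alpha> * x) (u * y)))"

definition vecs :: "nat \<Rightarrow> (nat \<Rightarrow> 'a::ring_1) set" where
  "vecs n = {x. \<forall>k\<ge>n. x k = 0}"

definition vadd :: "(nat \<Rightarrow> 'a::ring_1) \<Rightarrow> (nat \<Rightarrow> 'a) \<Rightarrow> (nat \<Rightarrow> 'a)" where
  "vadd x y = (\<lambda>k. x k + y k)"

definition vsmult :: "'a::ring_1 \<Rightarrow> (nat \<Rightarrow> 'a) \<Rightarrow> (nat \<Rightarrow> 'a)" where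
  "vsmult r x = (\<lambda>k. r * x k)"

definition lincomb :: "(nat \<Rightarrow> 'a::ring_1) \<Rightarrow> (nat \<Rightarrow> nat \<Rightarrow> 'a) \<Rightarrow> nat \<Rightarrow> (nat \<Rightarrow> 'a)" where
  "lincomb c b i = (\<lambda>k. \<Sum>j\<in>{1..i}. c j * b j k)"

definition is_basis :: "nat \<Rightarrow> (nat \<Rightarrow> nat \<Rightarrow> 'a::ring_1) \<Rightarrow> bool" where
  "is_basis n b \<longleftrightarrow> (\<forall>j\<in>{1..n}. b j \<in> vecs n) \<and>
     (\<forall>x\<in>vecs n. \<exists>c. x = lincomb c b n) \<and>
     (\<forall>c c'. lincomb c b n = lincomb c' b n \<longrightarrow> (\<forall>j\<in>{1..n}. c j = c' j))"

definition Vsp :: "(nat \<Rightarrow> nat \<Rightarrow> 'a::ring_1) \<Rightarrow> nat \<Rightarrow> (nat \<Rightarrow> 'a) set" where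
  "Vsp b i = {lincomb c b i | c. True}"

definition coord :: "nat \<Rightarrow> (nat \<Rightarrow> nat \<Rightarrow> 'a::ring_1) \<Rightarrow> (nat \<Rightarrow> 'a) \<Rightarrow> nat \<Rightarrow> 'a" where
  "coord n b x = (THE c. (\<forall>j. j \<notin> {1..n} \<longrightarrow> c j = 0) \<and> x = lincomb c b n)"

definition lexless :: "nat \<Rightarrow> (nat \<Rightarrow> nat \<Rightarrow> 'a::ring_1) \<Rightarrow> ('a \<Rightarrow> 'a \<Rightarrow> bool)
    \<Rightarrow> (nat \<Rightarrow> 'a) \<Rightarrow> (nat \<Rightarrow> 'a) \<Rightarrow> bool" where
  "lexless n b lt x y \<longleftrightarrow>
     (\<exists>i\<in>{1..n}. x \<in> Vsp b (i - 1) \<and> y \<in> Vsp b i - Vsp b (i - 1)) \<or>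
     (\<exists>i\<in>{1..n}. x \<in> Vsp b i - Vsp b (i - 1) \<and> y \<in> Vsp b i - Vsp b (i - 1) \<and> x \<noteq> y \<and>
        (let k = GREATEST k. k \<le> i \<and> coord n b x k \<noteq> coord n b y k
         in lt (coord n b x k) (coord n b y k)))"

definition left_multiplicative :: "nat \<Rightarrow> ((nat \<Rightarrow> 'a::ring_1) \<Rightarrow> bool) \<Rightarrow> bool" where
  "left_multiplicative n P \<longleftrightarrow> (\<forall>u\<in>units. \<forall>x\<in>vecs n. P (vsmult u x) = P x)"

definition good :: "((nat \<Rightarrow> 'a::ring_1) \<Rightarrow> bool) \<Rightarrow> 'a set \<Rightarrow> (nat \<Rightarrow> 'a) set \<Rightarrow> (nat \<Rightarrow> 'a) \<Rightarrow> bool" where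
  "good P \<Gamma> C a \<longleftrightarrow> (\<forall>\<gamma>\<in>\<Gamma>. \<forall>c\<in>C. P (vadd (vsmult \<gamma> a) c))"

primrec greedy :: "nat \<Rightarrow> (nat \<Rightarrow> nat \<Rightarrow> 'a::ring_1) \<Rightarrow> ('a \<Rightarrow> 'a \<Rightarrow> bool)
    \<Rightarrow> ((nat \<Rightarrow> 'a) \<Rightarrow> bool) \<Rightarrow> 'a set \<Rightarrow> nat \<Rightarrow> (nat \<Rightarrow> 'a) set" where
  "greedy n b lt P \<Gamma> 0 = {\<lambda>k. 0}"
| "greedy n b lt P \<Gamma> (Suc i) =
     (let C = greedy n b lt P \<Gamma> i;
          G = {a \<in> Vsp b (Suc i) - Vsp b i. good P \<Gamma> C a}
      in if G = {} then C
         else (let a = (THE a. a \<in> G \<and> (\<forall>y\<in>G. y \<noteq> a \<longrightarrow> lexless n b lt a y))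
               in {vadd (vsmult r a) c | r c. c \<in> C}))"

end

theory Submission
  imports Defs
begin


lemma lprin_sub: "y \<in> lprin x \<Longrightarrow> lprin y \<subseteq> lprin x"
  unfolding lprin_def by (auto simp: mult.assoc[symmetric])

lemma lprin_self: "(x::'a::ring_1) \<in> lprin x"
  unfolding lprin_def by (auto intro: exI[of _ 1])

lemma units_pow1: fixes u :: "'a::ring_1" assumes "m \<ge> 1" "u^m = 1" shows "u \<in> units"
proof -
  obtain k where k: "m = Suc k" using assms(1) by (cases m) auto
  have "u * u^k = 1" using assms(2) k by simp
  moreover have "u^k * u = 1" using assms(2) k by (simp add: power_commutes)
  ultimately show ?thesis unfolding units_def by blast
qed

lemma fitting: fixes u :: "'a::{ring_1,finite}" shows "\<exists>m\<ge>1. u^(2*m) = u^m"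
proof -
  have "\<not> inj (\<lambda>k::nat. u^k)"
  proof
    assume "inj (\<lambda>k::nat. u^k)"
    then have "finite (UNIV::nat set)"
      using finite_imageD[of "\<lambda>k::nat. u^k" UNIV] by (metis finite subset_UNIV finite_subset)
    then show False by simp
  qed
  then obtain i j where ij: "i < j" "u^i = u^j"
    unfolding inj_def by (metis linorder_neqE_nat)
  define p where "p = j - i"
  have p1: "p \<ge> 1" using ij p_def by simp
  have per: "u^(k+p) = u^k" if "k \<ge> i" for k
  proof -
    have "u^(k+p) = u^(k-i) * u^j" using that ij p_def by (simp add: power_add[symmetric])
    also have "\<dots> = u^(k-i) * u^i" using ij by simp
    also have "\<dots> = u^k" using that by (simp add: power_add[symmetric])
    finally show ?thesis .
  qed
  have perq: "u^(k+q*p) = u^k" if "k \<ge> i" for k q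
  proof (induction q)
    case 0 then show ?case by simp
  next
    case (Suc q)
    have "u^(k + Suc q * p) = u^((k + q*p) + p)" by (simp add: algebra_simps)
    also have "\<dots> = u^(k+q*p)" using per[of "k+q*p"] that by simp
    finally show ?case using Suc by simp
  qed
  define m where "m = (i+1)*p"
  have "m \<ge> 1" using p1 m_def by simp
  moreover have "m \<ge> i"
  proof -
    have "i*1 \<le> i*p" using p1 by (rule mult_le_mono2)
    then show ?thesis unfolding m_def by (simp add: trans_le_add2)
  qed
  ultimately have "u^(m+(i+1)*p) = u^m" using perq[of m "i+1"] by simp
  moreover have "2*m = m+(i+1)*p" unfolding m_def by simp
  ultimately have "u^(2*m) = u^m" by metis
  then show ?thesis using \<open>m\<ge>1\<close> by blast
qed

lemma fit_pow: fixes u :: "'a::ring_1" assumes "u^(2*m) = u^m" shows "u^((Suc j)*m) = u^m"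
proof (induction j)
  case 0 then show ?case by simp
next
  case (Suc j)
  have "u^((Suc (Suc j))*m) = u^m * u^((Suc j)*m)" by (simp add: power_add[symmetric])
  also have "\<dots> = u^(2*m)" using Suc by (simp add: power_add[symmetric] mult_2)
  finally show ?case using assms by simp
qed

lemma fit_inter: fixes u :: "'a::ring_1" assumes "m \<ge> 1" "u^(2*m) = u^m"
  shows "(\<Inter>k. lprin (u^k)) = lprin (u^m)"
proof
  show "(\<Inter>k. lprin (u^k)) \<subseteq> lprin (u^m)" by blast
  show "lprin (u^m) \<subseteq> (\<Inter>k. lprin (u^k))"
  proof
    fix z assume z: "z \<in> lprin (u^m)"
    show "z \<in> (\<Inter>k. lprin (u^k))"
    proof
      fix k
      have ge: "(Suc k)*m \<ge> k" using assms(1) by (metis le_SucI le_refl mult.commute mult_le_mono2 mult_1_right le_trans Suc_le_eq less_imp_le)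
      have "u^m = u^((Suc k)*m)" using fit_pow[OF assms(2)] by simp
      also have "\<dots> = u^((Suc k)*m - k) * u^k" using ge by (simp add: power_add[symmetric])
      finally have "u^m \<in> lprin (u^k)" unfolding lprin_def by blast
      then show "z \<in> lprin (u^k)" using z lprin_sub by blast
    qed
  qed
qed



lemma left_ideal_mult: "left_ideal L \<Longrightarrow> x \<in> L \<Longrightarrow> r * x \<in> L"
  unfolding left_ideal_def by blast
lemma left_ideal_add: "left_ideal L \<Longrightarrow> x \<in> L \<Longrightarrow> y \<in> L \<Longrightarrow> x + y \<in> L"
  unfolding left_ideal_def by blast
lemma left_ideal_zero: "left_ideal L \<Longrightarrow> 0 \<in> L"
  unfolding left_ideal_def by blast
lemma left_ideal_diff: "left_ideal L \<Longrightarrow> x \<in> L \<Longrightarrow> y \<in> L \<Longrightarrow> x - y \<in> L"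
  using left_ideal_add[of L x "(-1) * y"] left_ideal_mult[of L y "-1"] by simp

lemma geom: fixes D :: "'a::ring_1" shows "(\<Sum>j<k. D^j) * (1 - D) = 1 - D^k"
proof (induction k)
  case 0 then show ?case by simp
next
  case (Suc k)
  have "(\<Sum>j<Suc k. D^j) * (1 - D) = (\<Sum>j<k. D^j) * (1 - D) + D^k * (1 - D)"
    by (simp add: distrib_right)
  also have "\<dots> = 1 - D^k + D^k * (1 - D)" using Suc by simp
  also have "\<dots> = 1 - D^(Suc k)" by (simp add: algebra_simps power_Suc2 power_commutes)
  finally show ?case .
qed

lemma sr1_step:
  fixes u :: "'a::{ring_1,finite}"
  assumes L: "left_ideal L" and wu: "w * u + l' = 1" and l': "l' \<in> L" and nu: "u \<notin> units"
  shows "\<exists>l1\<in>L. card (\<Inter>k. lprin (u^k)) < card (\<Inter>k. lprin ((u + l1)^k))"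
proof -
  obtain m where m1: "m \<ge> 1" and mm: "u^(2*m) = u^m" using fitting by blast
  define e where "e = u^m"
  define f where "f = 1 - e"
  have ee: "e * e = e" using mm unfolding e_def by (simp add: power_add[symmetric] mult_2)
  have ef: "e * f = 0" unfolding f_def using ee by (simp add: algebra_simps)
  have fe: "f * e = 0" unfolding f_def using ee by (simp add: algebra_simps)
  have ff: "f * f = f" unfolding f_def using ee by (simp add: algebra_simps)
  have ue: "u * e = e * u" unfolding e_def by (simp add: power_commutes)
  have uf: "u * f = f * u" unfolding f_def using ue by (simp add: algebra_simps)
  have e1: "e \<noteq> 1"
  proof
    assume "e = 1"
    then have "u \<in> units" using units_pow1[OF m1, of u] e_def by simp
    then show False using nu by simp
  qed
  have f0: "f \<noteq> 0" using e1 f_def by simp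
  define l1 where "l1 = f * l'"
  have l1L: "l1 \<in> L" using left_ideal_mult[OF L l'] l1_def by simp
  define u' where "u' = u + l1"
  have I1: "(\<Inter>k. lprin (u^k)) = lprin e" using fit_inter[OF m1 mm] e_def by simp
  obtain m' where m1': "m' \<ge> 1" and mm': "u'^(2*m') = u'^m'" using fitting by blast
  have I2: "(\<Inter>k. lprin (u'^k)) = lprin (u'^m')" using fit_inter[OF m1' mm'] by simp
  have eu': "e * u' = e * u" unfolding u'_def l1_def
    by (simp add: distrib_left mult.assoc[symmetric] ef)
  have A: "e * u'^k = u^k * e" for k
  proof (induction k)
    case 0 then show ?case by simp
  next
    case (Suc k)
    have "e * u'^(Suc k) = (e * u') * u'^k" by (simp add: mult.assoc)
    also have "\<dots> = (u * e) * u'^k" using eu' ue by simp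
    also have "\<dots> = u * (e * u'^k)" by (simp add: mult.assoc)
    also have "\<dots> = u^(Suc k) * e" using Suc by (simp add: mult.assoc)
    finally show ?case .
  qed
  have B: "e \<in> lprin (u'^m')"
  proof -
    have ge: "(Suc m')*m \<ge> m'" using m1 by (metis mult_le_mono2 mult_1_right mult.commute le_SucI le_refl le_trans)
    have "e = u^((Suc m')*m) * e" using fit_pow[OF mm, of m'] ee e_def by simp
    also have "\<dots> = u^((Suc m')*m - m') * (u^m' * e)" using ge
      by (simp add: power_add[symmetric] mult.assoc[symmetric])
    also have "\<dots> = (u^((Suc m')*m - m') * e) * u'^m'" using A[of m'] by (simp add: mult.assoc)
    finally show ?thesis unfolding lprin_def by blast
  qed
  define D where "D = f * u' * f"
  define N where "N = u * f"
  define W where "W = f * w * f"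
  have fuf: "f * u * f = N" unfolding N_def using uf ff by (metis mult.assoc)
  have fN: "f * N = N" using fuf unfolding N_def by (metis ff mult.assoc uf)
  have Nf: "N * f = N" unfolding N_def using ff by (simp add: mult.assoc)
  have l'eq: "l' = 1 - w * u" using wu by (simp add: algebra_simps)
  have D_eq: "D = N + f - W * N"
  proof -
    have h1: "D = f * u * f + f * (f * l') * f" unfolding D_def u'_def l1_def
      by (simp add: distrib_left distrib_right)
    have h2: "f * (f * l') * f = f * l' * f" using ff by (simp add: mult.assoc[symmetric])
    have h3: "f * l' * f = f * f - f * w * u * f" unfolding l'eq
      by (simp add: right_diff_distrib left_diff_distrib mult.assoc)
    have h4a: "W * N = f * w * (f * u * f)" unfolding W_def N_def by (simp add: mult.assoc)
    have h4: "f * w * u * f = W * N" unfolding h4a fuf unfolding N_def by (simp add: mult.assoc)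
    have "D = N + (f - W * N)" unfolding h1 h2 h3 h4 fuf ff by simp
    then show ?thesis by (simp add: add_diff_eq)
  qed
  have Npow: "N^(Suc j) = u^(Suc j) * f" for j
  proof (induction j)
    case 0 then show ?case unfolding N_def by simp
  next
    case (Suc j)
    have fuj: "f * u^k = u^k * f" for k
    proof (induction k)
      case 0 then show ?case by simp
    next
      case (Suc k)
      have "f * u^(Suc k) = (f * u) * u^k" by (simp add: mult.assoc)
      also have "\<dots> = (u * f) * u^k" using uf by simp
      also have "\<dots> = u * (f * u^k)" by (simp add: mult.assoc)
      also have "\<dots> = u^(Suc k) * f" using Suc by (simp add: mult.assoc)
      finally show ?case .
    qed
    have "N^(Suc (Suc j)) = u * f * (u^(Suc j) * f)" using Suc unfolding N_def by simp
    also have "\<dots> = u * (f * u^(Suc j)) * f" by (simp add: mult.assoc)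
    also have "\<dots> = u * (u^(Suc j) * f) * f" by (simp only: fuj)
    also have "\<dots> = (u * u^(Suc j)) * (f * f)" by (simp only: mult.assoc)
    also have "\<dots> = u^(Suc (Suc j)) * f" by (simp only: ff power_Suc)
    finally show ?case .
  qed
  have Nm: "N^m = 0"
  proof -
    obtain k where "m = Suc k" using m1 by (cases m) auto
    then show ?thesis using Npow[of k] ef e_def by simp
  qed
  have Dnil: "D^k \<noteq> 0" for k
  proof
    assume Dk: "D^k = 0"
    define Q where "Q = (\<Sum>j<k. D^j)"
    have "Q * (1 - D) = 1" using geom[of D k] Dk Q_def by simp
    moreover have "1 - D = e + (W - 1) * N" using D_eq f_def by (simp add: algebra_simps)
    ultimately have "Q * (e + (W - 1) * N) * f = f" by simp
    then have "Q * (W - 1) * N = f" using ef Nf by (simp add: algebra_simps)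
    define v where "v = Q * (W - 1)"
    have vN: "v * N = f" using \<open>Q * (W - 1) * N = f\<close> v_def by simp
    have "v^(Suc j) * N^(Suc j) = f" for j
    proof (induction j)
      case 0 then show ?case using vN by simp
    next
      case (Suc j)
      have "v^(Suc (Suc j)) * N^(Suc (Suc j)) = v * (v^(Suc j) * N^(Suc j)) * N"
        by (simp only: mult.assoc power_Suc2[of N "Suc j"] power_Suc[of v "Suc j"])
      also have "\<dots> = v * N" using Suc fN by (simp add: mult.assoc)
      finally show ?case using vN by simp
    qed
    moreover obtain k' where "m = Suc k'" using m1 by (cases m) auto
    ultimately have "f = 0" using Nm by (metis mult_zero_right)
    then show False using f0 by simp
  qed
  have C: "f * u'^k * f = D^k * f" for k
  proof (induction k)
    case 0 then show ?case using ff by simp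
  next
    case (Suc k)
    have euf: "e * u'^k * f = 0" using A[of k] by (simp add: mult.assoc ef)
    have ff': "f * (f * x) = f * x" for x using ff by (simp add: mult.assoc[symmetric])
    have "f * u'^(Suc k) * f = f * u' * (e + f) * u'^k * f" using f_def by (simp add: mult.assoc)
    also have "\<dots> = f * u' * (e * u'^k * f) + (f * u' * f) * (f * u'^k * f)"
      by (simp add: distrib_left distrib_right mult.assoc ff')
    also have "\<dots> = D * (D^k * f)" using euf Suc by (simp add: D_def)
    finally show ?case by (simp add: mult.assoc)
  qed
  have C': "f * u'^k * f \<noteq> 0" for k
  proof (cases k)
    case 0 then show ?thesis using f0 ff by simp
  next
    case (Suc j)
    have "D * f = D" unfolding D_def using ff by (simp add: mult.assoc)
    then have "D^k * f = D^k" using Suc by (simp add: power_Suc2 mult.assoc del: power_Suc)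
    then show ?thesis using C Dnil by simp
  qed
  have notin: "f * u'^m' \<notin> lprin e"
  proof
    assume "f * u'^m' \<in> lprin e"
    then obtain r where "f * u'^m' = r * e" unfolding lprin_def by blast
    then have "f * u'^m' * f = 0" using ef by (simp add: mult.assoc)
    then show False using C' by simp
  qed
  have inn: "f * u'^m' \<in> lprin (u'^m')" unfolding lprin_def by blast
  have "lprin e \<subset> lprin (u'^m')" using lprin_sub[OF B] notin inn by blast
  then have "card (lprin e) < card (lprin (u'^m'))" by (simp add: psubset_card_mono)
  then have "card (\<Inter>k. lprin (u^k)) < card (\<Inter>k. lprin ((u + l1)^k))"
    using I1 I2 unfolding u'_def by simp
  then show ?thesis using l1L by blast
qed



lemma sr1:
  fixes b :: "'a::{ring_1,finite}"
  assumes L: "left_ideal L" and wb: "w * b + l0 = 1" and l0: "l0 \<in> L"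
  shows "\<exists>l\<in>L. b + l \<in> units"
proof -
  define \<mu> where "\<mu> u = card (\<Inter>k. lprin ((u::'a)^k))" for u
  define S where "S = (\<lambda>l. \<mu> (b + l)) ` L"
  have fS: "finite S" unfolding S_def by simp
  have neS: "S \<noteq> {}" unfolding S_def using left_ideal_zero[OF L] by blast
  have "Max S \<in> S" using Max_in[OF fS neS] .
  then have "\<exists>l\<in>L. Max S = \<mu> (b + l)" unfolding S_def image_iff .
  then obtain l where lL: "l \<in> L" and lmax: "\<mu> (b + l) = Max S" by auto
  have le: "\<mu> (b + l') \<le> \<mu> (b + l)" if "l' \<in> L" for l'
    using Max_ge[OF fS, of "\<mu> (b + l')"] that lmax unfolding S_def by auto
  show ?thesis
  proof (rule ccontr)
    assume "\<not> ?thesis"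
    then have nu: "b + l \<notin> units" using lL by blast
    have eq: "w * (b + l) + (l0 - w * l) = 1" using wb by (simp add: algebra_simps)
    have inL: "l0 - w * l \<in> L" using left_ideal_diff[OF L l0 left_ideal_mult[OF L lL]] .
    obtain l1 where l1L: "l1 \<in> L" and lt: "\<mu> (b + l) < \<mu> ((b + l) + l1)"
      using sr1_step[OF L eq inL nu] unfolding \<mu>_def by blast
    have "l + l1 \<in> L" using left_ideal_add[OF L lL l1L] .
    then have "\<mu> (b + (l + l1)) \<le> \<mu> (b + l)" by (rule le)
    then show False using lt by (simp add: add.assoc)
  qed
qed

lemma assoc_unit:
  fixes r s :: "'a::{ring_1,finite}"
  assumes "lprin r = lprin s"
  shows "\<exists>u\<in>units. r = u * s"
proof -
  have "r \<in> lprin s" using assms lprin_self[of r] by simp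
  then obtain p where p: "r = p * s" unfolding lprin_def by blast
  have "s \<in> lprin r" using assms lprin_self[of s] by simp
  then obtain q where q: "s = q * r" unfolding lprin_def by blast
  define L where "L = {z. z * s = 0}"
  have L: "left_ideal L" unfolding left_ideal_def L_def by (auto simp: algebra_simps)
  have l0: "1 - q * p \<in> L" unfolding L_def using p q by (simp add: algebra_simps)
  have "q * p + (1 - q * p) = 1" by simp
  from sr1[OF L this l0] obtain z where "z \<in> L" "p + z \<in> units" by blast
  moreover have "(p + z) * s = r" using \<open>z \<in> L\<close> p unfolding L_def by (simp add: distrib_right)
  ultimately show ?thesis by metis
qed

lemma coset_lemma:
  fixes X Y :: "'a::{ring_1,finite}"
  assumes PL: "principal_left_ideal_ring TYPE('a)" and nX: "X \<notin> lprin Y"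
  shows "\<exists>t. lprin Y \<subset> lprin (X + t * Y) \<and> X + t * Y \<noteq> 0"
proof -
  define I where "I = {p * X + q * Y | p q. True}"
  have "left_ideal I"
    unfolding left_ideal_def
  proof (intro conjI ballI allI)
    have "0 = 0 * X + 0 * Y" by simp
    then show "0 \<in> I" unfolding I_def by blast
  next
    fix a c assume "a \<in> I" "c \<in> I"
    then obtain p1 q1 p2 q2 where "a = p1 * X + q1 * Y" "c = p2 * X + q2 * Y" unfolding I_def by blast
    then have "a + c = (p1 + p2) * X + (q1 + q2) * Y" by (simp add: algebra_simps)
    then show "a + c \<in> I" unfolding I_def by blast
  next
    fix r a assume "a \<in> I"
    then obtain p1 q1 where "a = p1 * X + q1 * Y" unfolding I_def by blast
    then have "r * a = (r * p1) * X + (r * q1) * Y" by (simp add: algebra_simps)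
    then show "r * a \<in> I" unfolding I_def by blast
  qed
  then obtain g where Ig: "I = lprin g" using PL unfolding principal_left_ideal_ring_def by blast
  have "g \<in> I" using Ig lprin_self by blast
  then obtain p q where g: "g = p * X + q * Y" unfolding I_def by blast
  have "X = 1 * X + 0 * Y" by simp
  then have "X \<in> I" unfolding I_def by blast
  then obtain x' where x': "X = x' * g" using Ig unfolding lprin_def by blast
  have "Y = 0 * X + 1 * Y" by simp
  then have "Y \<in> I" unfolding I_def by blast
  then obtain y' where y': "Y = y' * g" using Ig unfolding lprin_def by blast
  define L where "L = {t * y' + z | t z. z * g = 0}"
  have L: "left_ideal L"
    unfolding left_ideal_def
  proof (intro conjI ballI allI)
    have "(0::'a) = 0 * y' + 0 \<and> 0 * g = (0::'a)" by simp
    then show "0 \<in> L" unfolding L_def by blast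
  next
    fix a c assume "a \<in> L" "c \<in> L"
    then obtain t1 z1 t2 z2 where "a = t1 * y' + z1" "z1 * g = 0" "c = t2 * y' + z2" "z2 * g = 0"
      unfolding L_def by blast
    then have "a + c = (t1 + t2) * y' + (z1 + z2) \<and> (z1 + z2) * g = 0" by (simp add: algebra_simps)
    then show "a + c \<in> L" unfolding L_def by blast
  next
    fix r a assume "a \<in> L"
    then obtain t1 z1 where "a = t1 * y' + z1" "z1 * g = 0" unfolding L_def by blast
    then have "r * a = (r * t1) * y' + r * z1 \<and> (r * z1) * g = 0" by (simp add: algebra_simps)
    then show "r * a \<in> L" unfolding L_def by blast
  qed
  define z0 where "z0 = 1 - p * x' - q * y'"
  have "z0 * g = g - p * (x' * g) - q * (y' * g)" unfolding z0_def
    by (simp add: left_diff_distrib mult.assoc)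
  also have "\<dots> = g - p * X - q * Y" using x' y' by simp
  also have "\<dots> = 0" using g by simp
  finally have z0g: "z0 * g = 0" .
  have "1 - p * x' = q * y' + z0 \<and> z0 * g = 0" using z0g unfolding z0_def by simp
  then have l0: "1 - p * x' \<in> L" unfolding L_def by blast
  have "p * x' + (1 - p * x') = 1" by simp
  from sr1[OF L this l0] obtain l where "l \<in> L" and vu: "x' + l \<in> units" by blast
  then obtain t z where l: "l = t * y' + z" and zg: "z * g = 0" unfolding L_def by blast
  define v where "v = x' + l"
  have vg: "v * g = X + t * Y" unfolding v_def l using x' y' zg
    by (simp add: distrib_right mult.assoc)
  obtain vi where vi: "vi * v = 1" using vu unfolding units_def v_def by blast
  have eqI: "lprin (X + t * Y) = lprin g"
  proof
    have "X + t * Y \<in> lprin g" using vg[symmetric] unfolding lprin_def by blast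
    then show "lprin (X + t * Y) \<subseteq> lprin g" by (rule lprin_sub)
    have "g = vi * (X + t * Y)" using vg vi by (metis mult.assoc mult_1_left)
    then have "g \<in> lprin (X + t * Y)" unfolding lprin_def by blast
    then show "lprin g \<subseteq> lprin (X + t * Y)" by (rule lprin_sub)
  qed
  have "Y \<in> lprin g" using y' unfolding lprin_def by blast
  then have sub: "lprin Y \<subseteq> lprin g" by (rule lprin_sub)
  have Xg: "X \<in> lprin g" using x' unfolding lprin_def by blast
  have ps: "lprin Y \<subset> lprin (X + t * Y)" using eqI sub Xg nX by blast
  have "X + t * Y \<noteq> 0"
  proof
    assume "X + t * Y = 0"
    then have "lprin g = {0}" using eqI unfolding lprin_def by auto
    then have "X = 0" using Xg by simp
    then have "X = 0 * Y" by simp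
    then have "X \<in> lprin Y" unfolding lprin_def by blast
    then show False using nX by simp
  qed
  then show ?thesis using ps by blast
qed



lemma vecs_finite: "finite (vecs n :: (nat \<Rightarrow> 'a::{ring_1,finite}) set)"
proof -
  have inj: "inj_on (\<lambda>x. map x [0..<n]) (vecs n :: (nat \<Rightarrow> 'a) set)"
  proof
    fix x y :: "nat \<Rightarrow> 'a" assume x: "x \<in> vecs n" and y: "y \<in> vecs n"
      and e: "map x [0..<n] = map y [0..<n]"
    show "x = y"
    proof
      fix k show "x k = y k"
      proof (cases "k < n")
        case True
        then have "k \<in> set [0..<n]" by simp
        then show ?thesis using e by (simp only: map_eq_conv)
      next
        case False
        then show ?thesis using x y unfolding vecs_def by simp
      qed
    qed
  qed
  have "(\<lambda>x. map x [0..<n]) ` (vecs n :: (nat \<Rightarrow> 'a) set) \<subseteq> {xs. set xs \<subseteq> UNIV \<and> length xs = n}"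
    by auto
  moreover have "finite {xs :: 'a list. set xs \<subseteq> UNIV \<and> length xs = n}"
    by (rule finite_lists_length_eq) simp
  ultimately show ?thesis using inj_on_finite[OF inj] by blast
qed

lemma lincomb0: "lincomb c b 0 = (\<lambda>k. 0)" unfolding lincomb_def by simp

lemma Vsp0: "Vsp b 0 = {\<lambda>k. 0}" unfolding Vsp_def using lincomb0 by auto

lemma lincomb_add: "vadd (lincomb c b i) (lincomb d b i) = lincomb (\<lambda>j. c j + d j) b i"
  unfolding vadd_def lincomb_def by (simp add: sum.distrib distrib_right)

lemma lincomb_smult: "vsmult r (lincomb c b i) = lincomb (\<lambda>j. r * c j) b i"
  unfolding vsmult_def lincomb_def by (simp add: sum_distrib_left mult.assoc)

lemma lincomb_Suc0: "c (Suc i) = 0 \<Longrightarrow> lincomb c b (Suc i) = lincomb c b i"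
  unfolding lincomb_def by (simp add: sum.cl_ivl_Suc)

lemma lincomb_cong: "(\<And>j. j \<in> {1..i} \<Longrightarrow> c j = d j) \<Longrightarrow> lincomb c b i = lincomb d b i"
  unfolding lincomb_def by (auto intro!: sum.cong)

lemma Vsp_I: "x = lincomb c b i \<Longrightarrow> x \<in> Vsp b i"
  unfolding Vsp_def by blast

lemma Vsp_E: "x \<in> Vsp b i \<Longrightarrow> (\<And>c. x = lincomb c b i \<Longrightarrow> P) \<Longrightarrow> P"
  unfolding Vsp_def by blast

lemma Vsp_mono_Suc: "Vsp b i \<subseteq> Vsp b (Suc i)"
proof
  fix x assume "x \<in> Vsp b i"
  then obtain c where x: "x = lincomb c b i" by (rule Vsp_E)
  have "lincomb (c(Suc i := 0)) b (Suc i) = lincomb (c(Suc i := 0)) b i" by (rule lincomb_Suc0) simp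
  also have "\<dots> = lincomb c b i" by (rule lincomb_cong) auto
  finally show "x \<in> Vsp b (Suc i)" using x by (intro Vsp_I[of x "c(Suc i := 0)"]) simp
qed

lemma Vsp_mono: "i \<le> j \<Longrightarrow> Vsp b i \<subseteq> Vsp b j"
proof (induction j)
  case 0 then show ?case by simp
next
  case (Suc j)
  then show ?case using Vsp_mono_Suc[of b j] by (cases "i = Suc j") auto
qed

lemma Vsp_zero: "(\<lambda>k. 0) \<in> Vsp b i"
  using Vsp_mono[of 0 i b] Vsp0[of b] by auto

lemma Vsp_add: "x \<in> Vsp b i \<Longrightarrow> y \<in> Vsp b i \<Longrightarrow> vadd x y \<in> Vsp b i"
  by (elim Vsp_E) (simp add: lincomb_add Vsp_I)

lemma Vsp_smult: "x \<in> Vsp b i \<Longrightarrow> vsmult r x \<in> Vsp b i"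
  by (elim Vsp_E) (simp add: lincomb_smult Vsp_I)

lemma Vsp_vecs: assumes "is_basis n b" "i \<le> n" shows "Vsp b i \<subseteq> vecs n"
proof
  fix x assume "x \<in> Vsp b i"
  then obtain c where x: "x = lincomb c b i" by (rule Vsp_E)
  have "\<forall>j\<in>{1..n}. b j \<in> vecs n" using assms(1) unfolding is_basis_def by blast
  then have "\<forall>j\<in>{1..i}. \<forall>k\<ge>n. b j k = 0" using assms(2) unfolding vecs_def by auto
  then show "x \<in> vecs n" unfolding vecs_def x lincomb_def by simp
qed

lemma coord_formula:
  assumes B: "is_basis n b" and i: "i \<le> n"
  shows "coord n b (lincomb c b i) = (\<lambda>k. if k \<in> {1..i} then c k else 0)"
proof -
  define c' where "c' = (\<lambda>k. if k \<in> {1..i} then c k else 0)"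
  have eq: "lincomb c b i = lincomb c' b n"
  proof -
    have "lincomb c b i = lincomb c' b i" unfolding c'_def by (rule lincomb_cong) simp
    also have "\<dots> = lincomb c' b n" unfolding lincomb_def
    proof
      fix k
      show "(\<Sum>j\<in>{1..i}. c' j * b j k) = (\<Sum>j\<in>{1..n}. c' j * b j k)"
        by (rule sum.mono_neutral_cong_left) (use i in \<open>auto simp: c'_def\<close>)
    qed
    finally show ?thesis .
  qed
  have P: "(\<forall>j. j \<notin> {1..n} \<longrightarrow> c' j = 0) \<and> lincomb c b i = lincomb c' b n"
    using eq i unfolding c'_def by auto
  show ?thesis unfolding coord_def c'_def[symmetric]
  proof (rule the_equality)
    show "(\<forall>j. j \<notin> {1..n} \<longrightarrow> c' j = 0) \<and> lincomb c b i = lincomb c' b n" by (rule P)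
  next
    fix d assume d: "(\<forall>j. j \<notin> {1..n} \<longrightarrow> d j = 0) \<and> lincomb c b i = lincomb d b n"
    then have "lincomb d b n = lincomb c' b n" using eq by simp
    then have "\<forall>j\<in>{1..n}. d j = c' j" using B unfolding is_basis_def by blast
    then show "d = c'" using d P by (metis ext)
  qed
qed

lemma lincomb_coord:
  assumes B: "is_basis n b" and i: "i \<le> n" and x: "x \<in> Vsp b i"
  shows "lincomb (coord n b x) b i = x"
proof -
  obtain c where xc: "x = lincomb c b i" using x by (rule Vsp_E)
  show ?thesis unfolding xc coord_formula[OF B i] by (rule lincomb_cong) simp
qed

lemma coord_out:
  assumes B: "is_basis n b" and i: "i \<le> n" and x: "x \<in> Vsp b i" and k: "k \<notin> {1..i}"
  shows "coord n b x k = 0"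
proof -
  obtain c where xc: "x = lincomb c b i" using x by (rule Vsp_E)
  show ?thesis unfolding xc coord_formula[OF B i] by (simp only: if_not_P[OF k])
qed

lemma coord_add:
  assumes B: "is_basis n b" and i: "i \<le> n" and x: "x \<in> Vsp b i" and y: "y \<in> Vsp b i"
  shows "coord n b (vadd x y) k = coord n b x k + coord n b y k"
proof -
  obtain c where xc: "x = lincomb c b i" using x by (rule Vsp_E)
  obtain d where yd: "y = lincomb d b i" using y by (rule Vsp_E)
  show ?thesis unfolding xc yd lincomb_add coord_formula[OF B i] by simp
qed

lemma coord_smult:
  assumes B: "is_basis n b" and i: "i \<le> n" and x: "x \<in> Vsp b i"
  shows "coord n b (vsmult r x) k = r * coord n b x k"
proof -
  obtain c where xc: "x = lincomb c b i" using x by (rule Vsp_E)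
  show ?thesis unfolding xc lincomb_smult coord_formula[OF B i] by simp
qed

lemma top_zero_iff:
  assumes B: "is_basis n b" and i: "Suc i \<le> n" and x: "x \<in> Vsp b (Suc i)"
  shows "x \<in> Vsp b i \<longleftrightarrow> coord n b x (Suc i) = 0"
proof
  assume "x \<in> Vsp b i"
  then show "coord n b x (Suc i) = 0" using coord_out[OF B _ _, of i x "Suc i"] i by simp
next
  assume z: "coord n b x (Suc i) = 0"
  have "x = lincomb (coord n b x) b (Suc i)" using lincomb_coord[OF B i x] by simp
  also have "\<dots> = lincomb (coord n b x) b i" using z by (rule lincomb_Suc0)
  finally show "x \<in> Vsp b i" by (rule Vsp_I)
qed

lemma Vsp_eq_coord:
  assumes B: "is_basis n b" and i: "i \<le> n" and x: "x \<in> Vsp b i" and y: "y \<in> Vsp b i"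
    and e: "\<And>k. k \<in> {1..i} \<Longrightarrow> coord n b x k = coord n b y k"
  shows "x = y"
  using lincomb_coord[OF B i x] lincomb_coord[OF B i y] lincomb_cong[of i "coord n b x" "coord n b y" b] e
  by simp

lemma level_unique:
  assumes "x \<in> Vsp b i - Vsp b (i - 1)" "x \<in> Vsp b j - Vsp b (j - 1)" "i \<ge> 1" "j \<ge> 1"
  shows "i = j"
proof (rule ccontr)
  assume "i \<noteq> j"
  then consider "i < j" | "j < i" by linarith
  then show False
  proof cases
    case 1 then have "Vsp b i \<subseteq> Vsp b (j - 1)" by (intro Vsp_mono) simp
    then show False using assms by blast
  next
    case 2 then have "Vsp b j \<subseteq> Vsp b (i - 1)" by (intro Vsp_mono) simp
    then show False using assms by blast
  qed
qed

lemma decompose: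
  "x \<in> Vsp b i \<Longrightarrow> x = (\<lambda>k. 0) \<or> (\<exists>j\<in>{1..i}. x \<in> Vsp b j - Vsp b (j - 1))"
proof (induction i)
  case 0 then show ?case using Vsp0 by auto
next
  case (Suc i)
  show ?case
  proof (cases "x \<in> Vsp b i")
    case True then show ?thesis using Suc.IH by auto
  next
    case False
    then have "x \<in> Vsp b (Suc i) - Vsp b (Suc i - 1)" using Suc.prems by simp
    then show ?thesis by (intro disjI2 bexI[of _ "Suc i"]) simp_all
  qed
qed



definition dk :: "nat \<Rightarrow> (nat \<Rightarrow> nat \<Rightarrow> 'a::ring_1) \<Rightarrow> nat \<Rightarrow> (nat \<Rightarrow> 'a) \<Rightarrow> (nat \<Rightarrow> 'a) \<Rightarrow> nat" where
  "dk n b i x y = (GREATEST k. k \<le> i \<and> coord n b x k \<noteq> coord n b y k)"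

lemma dk_props:
  assumes B: "is_basis n b" and i: "i \<le> n" and x: "x \<in> Vsp b i" and y: "y \<in> Vsp b i" and ne: "x \<noteq> y"
  shows "dk n b i x y \<le> i" "coord n b x (dk n b i x y) \<noteq> coord n b y (dk n b i x y)"
    "\<And>j. dk n b i x y < j \<Longrightarrow> j \<le> i \<Longrightarrow> coord n b x j = coord n b y j"
proof -
  define P where "P = (\<lambda>k. k \<le> i \<and> coord n b x k \<noteq> coord n b y k)"
  obtain k where k: "k \<in> {1..i}" "coord n b x k \<noteq> coord n b y k"
    using Vsp_eq_coord[OF B i x y] ne by blast
  have Pk: "P k" using k unfolding P_def by simp
  have bnd: "\<And>j. P j \<Longrightarrow> j \<le> i" unfolding P_def by simp
  have G: "P (dk n b i x y)" unfolding dk_def P_def[symmetric] using GreatestI_nat[of P k i, OF Pk bnd] .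
  then show "dk n b i x y \<le> i" "coord n b x (dk n b i x y) \<noteq> coord n b y (dk n b i x y)"
    unfolding P_def by auto
  fix j assume j: "dk n b i x y < j" "j \<le> i"
  show "coord n b x j = coord n b y j"
  proof (rule ccontr)
    assume "coord n b x j \<noteq> coord n b y j"
    then have "P j" using j unfolding P_def by simp
    then have "j \<le> dk n b i x y" unfolding dk_def P_def[symmetric] using Greatest_le_nat[of P j i] bnd by blast
    then show False using j by simp
  qed
qed

lemma dk_eq:
  assumes "k \<le> i" "coord n b x k \<noteq> coord n b y k"
    and "\<And>j. k < j \<Longrightarrow> j \<le> i \<Longrightarrow> coord n b x j = coord n b y j"
  shows "dk n b i x y = k"
  unfolding dk_def
proof (rule Greatest_equality)
  show "k \<le> i \<and> coord n b x k \<noteq> coord n b y k" using assms by simp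
  fix j assume "j \<le> i \<and> coord n b x j \<noteq> coord n b y j"
  then show "j \<le> k" using assms(3)[of j] by (cases "k < j") auto
qed

lemma dk_sym: "dk n b i x y = dk n b i y x"
proof -
  have "(\<lambda>k. k \<le> i \<and> coord n b x k \<noteq> coord n b y k) = (\<lambda>k. k \<le> i \<and> coord n b y k \<noteq> coord n b x k)"
    by auto
  then show ?thesis unfolding dk_def by simp
qed

lemma lex_same:
  assumes B: "is_basis n b" and i1: "1 \<le> i" and i: "i \<le> n"
    and x: "x \<in> Vsp b i - Vsp b (i - 1)" and y: "y \<in> Vsp b i - Vsp b (i - 1)"
  shows "lexless n b lt x y \<longleftrightarrow> x \<noteq> y \<and> lt (coord n b x (dk n b i x y)) (coord n b y (dk n b i x y))"
proof
  assume "lexless n b lt x y"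
  then consider (a) i' where "i' \<in> {1..n}" "x \<in> Vsp b (i' - 1)" "y \<in> Vsp b i' - Vsp b (i' - 1)"
    | (b) i' where "i' \<in> {1..n}" "x \<in> Vsp b i' - Vsp b (i' - 1)" "y \<in> Vsp b i' - Vsp b (i' - 1)" "x \<noteq> y"
      "lt (coord n b x (dk n b i' x y)) (coord n b y (dk n b i' x y))"
    unfolding lexless_def Let_def dk_def by blast
  then show "x \<noteq> y \<and> lt (coord n b x (dk n b i x y)) (coord n b y (dk n b i x y))"
  proof cases
    case a
    then have "i' = i" using level_unique[of y b i' i] y i1 by auto
    then show ?thesis using a x by auto
  next
    case b
    then have "i' = i" using level_unique[of x b i' i] x i1 by auto
    then show ?thesis using b by auto
  qed
next
  assume "x \<noteq> y \<and> lt (coord n b x (dk n b i x y)) (coord n b y (dk n b i x y))"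
  then have h: "x \<in> Vsp b i - Vsp b (i - 1) \<and> y \<in> Vsp b i - Vsp b (i - 1) \<and> x \<noteq> y \<and>
        (let k = GREATEST k. k \<le> i \<and> coord n b x k \<noteq> coord n b y k
         in lt (coord n b x k) (coord n b y k))" unfolding Let_def dk_def using x y by simp
  have "i \<in> {1..n}" using i1 i by simp
  then show "lexless n b lt x y" unfolding lexless_def using h by blast
qed

lemma lex_top:
  assumes B: "is_basis n b" and i1: "1 \<le> i" and i: "i \<le> n"
    and x: "x \<in> Vsp b i - Vsp b (i - 1)" and y: "y \<in> Vsp b i - Vsp b (i - 1)"
    and ne: "coord n b x i \<noteq> coord n b y i"
  shows "lexless n b lt x y \<longleftrightarrow> lt (coord n b x i) (coord n b y i)"
proof -
  have "dk n b i x y = i" by (rule dk_eq) (use ne in auto)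
  moreover have "x \<noteq> y" using ne by auto
  ultimately show ?thesis using lex_same[OF B i1 i x y] by simp
qed

lemma lex_asym:
  assumes B: "is_basis n b" and i1: "1 \<le> i" and i: "i \<le> n" and so: "strict_total_order lt"
    and x: "x \<in> Vsp b i - Vsp b (i - 1)" and y: "y \<in> Vsp b i - Vsp b (i - 1)"
  shows "\<not> (lexless n b lt x y \<and> lexless n b lt y x)"
proof
  assume h: "lexless n b lt x y \<and> lexless n b lt y x"
  then have "lt (coord n b x (dk n b i x y)) (coord n b y (dk n b i x y))"
    "lt (coord n b y (dk n b i x y)) (coord n b x (dk n b i x y))"
    using lex_same[OF B i1 i x y] lex_same[OF B i1 i y x] dk_sym[of n b i x y] by auto
  then show False using so unfolding strict_total_order_def by blast
qed

lemma lex_total: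
  assumes B: "is_basis n b" and i1: "1 \<le> i" and i: "i \<le> n" and so: "strict_total_order lt"
    and x: "x \<in> Vsp b i - Vsp b (i - 1)" and y: "y \<in> Vsp b i - Vsp b (i - 1)" and ne: "x \<noteq> y"
  shows "lexless n b lt x y \<or> lexless n b lt y x"
proof -
  have "coord n b x (dk n b i x y) \<noteq> coord n b y (dk n b i x y)"
    using dk_props(2)[OF B i _ _ ne] x y by auto
  then have "lt (coord n b x (dk n b i x y)) (coord n b y (dk n b i x y)) \<or>
             lt (coord n b y (dk n b i x y)) (coord n b x (dk n b i x y))"
    using so unfolding strict_total_order_def by blast
  then show ?thesis using lex_same[OF B i1 i x y] lex_same[OF B i1 i y x] dk_sym[of n b i x y] ne by auto
qed

lemma lex_trans:
  assumes B: "is_basis n b" and i1: "1 \<le> i" and i: "i \<le> n" and so: "strict_total_order lt"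
    and x: "x \<in> Vsp b i - Vsp b (i - 1)" and y: "y \<in> Vsp b i - Vsp b (i - 1)"
    and z: "z \<in> Vsp b i - Vsp b (i - 1)"
    and xy: "lexless n b lt x y" and yz: "lexless n b lt y z"
  shows "lexless n b lt x z"
proof -
  have tr: "\<And>p q r. lt p q \<Longrightarrow> lt q r \<Longrightarrow> lt p r" and irr: "\<And>p. \<not> lt p p"
    using so unfolding strict_total_order_def by blast+
  have nxy: "x \<noteq> y" and lxy: "lt (coord n b x (dk n b i x y)) (coord n b y (dk n b i x y))"
    using xy lex_same[OF B i1 i x y] by auto
  have nyz: "y \<noteq> z" and lyz: "lt (coord n b y (dk n b i y z)) (coord n b z (dk n b i y z))"
    using yz lex_same[OF B i1 i y z] by auto
  have nxz: "x \<noteq> z" using lex_asym[OF B i1 i so x y] xy yz by auto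
  define k1 where "k1 = dk n b i x y"
  define k2 where "k2 = dk n b i y z"
  have xV: "x \<in> Vsp b i" and yV: "y \<in> Vsp b i" and zV: "z \<in> Vsp b i" using x y z by auto
  note p1 = dk_props[OF B i xV yV nxy, folded k1_def]
  note p2 = dk_props[OF B i yV zV nyz, folded k2_def]
  have lxy': "lt (coord n b x k1) (coord n b y k1)" using lxy k1_def by simp
  have lyz': "lt (coord n b y k2) (coord n b z k2)" using lyz k2_def by simp
  consider "k1 = k2" | "k1 < k2" | "k2 < k1" by linarith
  then show ?thesis
  proof cases
    case 1
    have l: "lt (coord n b x k1) (coord n b z k1)" using tr[OF lxy'] lyz' 1 by simp
    have "dk n b i x z = k1"
    proof (rule dk_eq)
      show "k1 \<le> i" by (rule p1(1))
      show "coord n b x k1 \<noteq> coord n b z k1" using l irr by auto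
      fix j assume "k1 < j" "j \<le> i"
      then show "coord n b x j = coord n b z j" using p1(3) p2(3) 1 by auto
    qed
    then show ?thesis using lex_same[OF B i1 i x z] nxz l by simp
  next
    case 2
    have "coord n b x k2 = coord n b y k2" using p1(3) 2 p2(1) by auto
    then have l: "lt (coord n b x k2) (coord n b z k2)" using lyz' by simp
    have "dk n b i x z = k2"
    proof (rule dk_eq)
      show "k2 \<le> i" by (rule p2(1))
      show "coord n b x k2 \<noteq> coord n b z k2" using l irr by auto
      fix j assume "k2 < j" "j \<le> i"
      then show "coord n b x j = coord n b z j" using p1(3) p2(3) 2 by auto
    qed
    then show ?thesis using lex_same[OF B i1 i x z] nxz l by simp
  next
    case 3
    have "coord n b y k1 = coord n b z k1" using p2(3) 3 p1(1) by auto
    then have l: "lt (coord n b x k1) (coord n b z k1)" using lxy' by simp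
    have "dk n b i x z = k1"
    proof (rule dk_eq)
      show "k1 \<le> i" by (rule p1(1))
      show "coord n b x k1 \<noteq> coord n b z k1" using l irr by auto
      fix j assume "k1 < j" "j \<le> i"
      then show "coord n b x j = coord n b z j" using p1(3) p2(3) 3 by auto
    qed
    then show ?thesis using lex_same[OF B i1 i x z] nxz l by simp
  qed
qed

lemma finite_min_rel_aux:
  assumes "finite S" "S \<noteq> {}"
  shows "S \<subseteq> A \<Longrightarrow> (\<forall>x\<in>A. \<forall>y\<in>A. x \<noteq> y \<longrightarrow> r x y \<or> r y x) \<Longrightarrow>
    (\<forall>x\<in>A. \<forall>y\<in>A. \<forall>z\<in>A. r x y \<longrightarrow> r y z \<longrightarrow> r x z) \<Longrightarrow> \<exists>a\<in>S. \<forall>y\<in>S. y \<noteq> a \<longrightarrow> r a y"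
  using assms
proof (induction S rule: finite_ne_induct)
  case (singleton x) show ?case by blast
next
  case (insert x F)
  have FA: "F \<subseteq> A" and xA: "x \<in> A" using insert.prems(1) by auto
  obtain m where m: "m \<in> F" "\<forall>y\<in>F. y \<noteq> m \<longrightarrow> r m y"
    using insert.IH[OF FA insert.prems(2) insert.prems(3)] by blast
  have mA: "m \<in> A" using m FA by auto
  have mx: "m \<noteq> x" using m insert.hyps by auto
  show ?case
  proof (cases "r x m")
    case True
    have "\<forall>y\<in>insert x F. y \<noteq> x \<longrightarrow> r x y"
    proof (intro ballI impI)
      fix y assume "y \<in> insert x F" "y \<noteq> x"
      then have yF: "y \<in> F" by simp
      then have yA: "y \<in> A" using FA by auto
      show "r x y"
      proof (cases "y = m")
        case True then show ?thesis using \<open>r x m\<close> by simp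
      next
        case False
        then have "r m y" using m yF by simp
        then show ?thesis using insert.prems(3) xA mA yA \<open>r x m\<close> by blast
      qed
    qed
    then show ?thesis by blast
  next
    case False
    then have rmx: "r m x" using insert.prems(2) xA mA mx by blast
    have "\<forall>y\<in>insert x F. y \<noteq> m \<longrightarrow> r m y" using m rmx by blast
    then show ?thesis using m(1) by blast
  qed
qed



lemma vadd_zero: "vadd x (\<lambda>k. 0) = x" unfolding vadd_def by simp
lemma vsmult_zero_left: "vadd (vsmult 0 a) c = c" unfolding vadd_def vsmult_def by simp
lemma vsmult_one: "vsmult 1 a = a" unfolding vsmult_def by simp

lemma greedy_Suc_eq:
  "greedy n b lt P \<Gamma> (Suc i) =
    (if {a \<in> Vsp b (Suc i) - Vsp b i. good P \<Gamma> (greedy n b lt P \<Gamma> i) a} = {}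
     then greedy n b lt P \<Gamma> i
     else {vadd (vsmult r (THE a. a \<in> {a \<in> Vsp b (Suc i) - Vsp b i. good P \<Gamma> (greedy n b lt P \<Gamma> i) a} \<and>
        (\<forall>y\<in>{a \<in> Vsp b (Suc i) - Vsp b i. good P \<Gamma> (greedy n b lt P \<Gamma> i) a}. y \<noteq> a \<longrightarrow> lexless n b lt a y))) c
        | r c. c \<in> greedy n b lt P \<Gamma> i})"
  by (simp only: greedy.simps Let_def)

definition submod :: "(nat \<Rightarrow> 'a::ring_1) set \<Rightarrow> bool" where
  "submod C \<longleftrightarrow> (\<lambda>k. 0) \<in> C \<and> (\<forall>x\<in>C. \<forall>y\<in>C. vadd x y \<in> C) \<and> (\<forall>r. \<forall>x\<in>C. vsmult r x \<in> C)"

lemma submod_span: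
  assumes "submod C"
  shows "submod {vadd (vsmult r a) c | r c. c \<in> C}"
  unfolding submod_def
proof (intro conjI ballI allI)
  have "(\<lambda>k. 0) = vadd (vsmult 0 a) (\<lambda>k. 0)" unfolding vadd_def vsmult_def by simp
  moreover have "(\<lambda>k. 0) \<in> C" using assms unfolding submod_def by blast
  ultimately show "(\<lambda>k. 0) \<in> {vadd (vsmult r a) c | r c. c \<in> C}" by blast
next
  fix x y assume "x \<in> {vadd (vsmult r a) c | r c. c \<in> C}" "y \<in> {vadd (vsmult r a) c | r c. c \<in> C}"
  then obtain r1 c1 r2 c2 where h: "x = vadd (vsmult r1 a) c1" "c1 \<in> C" "y = vadd (vsmult r2 a) c2" "c2 \<in> C"
    by blast
  have "vadd x y = vadd (vsmult (r1 + r2) a) (vadd c1 c2)"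
    unfolding h vadd_def vsmult_def by (simp add: algebra_simps)
  moreover have "vadd c1 c2 \<in> C" using assms h unfolding submod_def by blast
  ultimately show "vadd x y \<in> {vadd (vsmult r a) c | r c. c \<in> C}" by blast
next
  fix s x assume "x \<in> {vadd (vsmult r a) c | r c. c \<in> C}"
  then obtain r1 c1 where h: "x = vadd (vsmult r1 a) c1" "c1 \<in> C" by blast
  have "vsmult s x = vadd (vsmult (s * r1) a) (vsmult s c1)"
    unfolding h vadd_def vsmult_def by (simp add: algebra_simps)
  moreover have "vsmult s c1 \<in> C" using assms h unfolding submod_def by blast
  ultimately show "vsmult s x \<in> {vadd (vsmult r a) c | r c. c \<in> C}" by blast
qed

lemma span_sup: "C \<subseteq> {vadd (vsmult r a) c | r c. c \<in> C}"
proof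
  fix c assume "c \<in> C"
  moreover have "c = vadd (vsmult 0 a) c" by (simp only: vsmult_zero_left)
  ultimately show "c \<in> {vadd (vsmult r a) c | r c. c \<in> C}" by blast
qed

lemma ifI2: "Q x \<Longrightarrow> Q y \<Longrightarrow> Q (if c then x else y)" by simp

lemma greedy_submod: "submod (greedy n b lt P \<Gamma> i)"
proof (induction i)
  case 0
  show ?case unfolding submod_def vadd_def vsmult_def by simp
next
  case (Suc i)
  show ?case unfolding greedy_Suc_eq[of n b lt P \<Gamma> i]
    by (rule ifI2[where Q=submod]) (rule Suc, rule submod_span[OF Suc])
qed

lemma greedy_mono_Suc: "greedy n b lt P \<Gamma> i \<subseteq> greedy n b lt P \<Gamma> (Suc i)"
  unfolding greedy_Suc_eq[of n b lt P \<Gamma> i]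
  by (rule ifI2[where Q="\<lambda>S. greedy n b lt P \<Gamma> i \<subseteq> S"]) (rule order_refl, rule span_sup)

lemma greedy_mono: "i \<le> j \<Longrightarrow> greedy n b lt P \<Gamma> i \<subseteq> greedy n b lt P \<Gamma> j"
proof (induction j)
  case 0 then show ?case by simp
next
  case (Suc j)
  then show ?case using greedy_mono_Suc[of n b lt P \<Gamma> j] by (cases "i = Suc j") auto
qed

lemma the_min:
  fixes b :: "nat \<Rightarrow> nat \<Rightarrow> 'a::{ring_1,finite}"
  assumes B: "is_basis n b" and i: "Suc i \<le> n" and so: "strict_total_order lt"
    and G: "G \<subseteq> Vsp b (Suc i) - Vsp b i" and ne: "G \<noteq> {}"
  shows "(THE a. a \<in> G \<and> (\<forall>y\<in>G. y \<noteq> a \<longrightarrow> lexless n b lt a y)) \<in> G \<and>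
     (\<forall>y\<in>G. y \<noteq> (THE a. a \<in> G \<and> (\<forall>y\<in>G. y \<noteq> a \<longrightarrow> lexless n b lt a y)) \<longrightarrow>
        lexless n b lt (THE a. a \<in> G \<and> (\<forall>y\<in>G. y \<noteq> a \<longrightarrow> lexless n b lt a y)) y)"
proof -
  define A where "A = Vsp b (Suc i) - Vsp b (Suc i - 1)"
  have GA: "G \<subseteq> A" using G unfolding A_def by simp
  have i1: "1 \<le> Suc i" by simp
  have "G \<subseteq> vecs n" using G Vsp_vecs[OF B i] by blast
  then have fin: "finite G" using finite_subset vecs_finite by blast
  have tot: "\<forall>x\<in>A. \<forall>y\<in>A. x \<noteq> y \<longrightarrow> lexless n b lt x y \<or> lexless n b lt y x"
    using lex_total[OF B i1 i so] unfolding A_def by blast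
  have tr: "\<forall>x\<in>A. \<forall>y\<in>A. \<forall>z\<in>A. lexless n b lt x y \<longrightarrow> lexless n b lt y z \<longrightarrow> lexless n b lt x z"
    using lex_trans[OF B i1 i so] unfolding A_def by blast
  obtain a where a: "a \<in> G" "\<forall>y\<in>G. y \<noteq> a \<longrightarrow> lexless n b lt a y"
    using finite_min_rel_aux[OF fin ne GA tot tr] by blast
  have ex1: "\<exists>!a. a \<in> G \<and> (\<forall>y\<in>G. y \<noteq> a \<longrightarrow> lexless n b lt a y)"
  proof (rule ex1I[of _ a])
    show "a \<in> G \<and> (\<forall>y\<in>G. y \<noteq> a \<longrightarrow> lexless n b lt a y)" using a by blast
    fix a' assume a': "a' \<in> G \<and> (\<forall>y\<in>G. y \<noteq> a' \<longrightarrow> lexless n b lt a' y)"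
    show "a' = a"
    proof (rule ccontr)
      assume ne: "a' \<noteq> a"
      have "lexless n b lt a' a" "lexless n b lt a a'" using a a' ne by auto
      moreover have "a \<in> A" "a' \<in> A" using a a' GA by auto
      ultimately show False using lex_asym[OF B i1 i so, of a a'] unfolding A_def by blast
    qed
  qed
  show ?thesis by (rule theI'[OF ex1])
qed

lemma greedy_vecs:
  fixes b :: "nat \<Rightarrow> nat \<Rightarrow> 'a::{ring_1,finite}"
  assumes B: "is_basis n b" and so: "strict_total_order lt"
  shows "i \<le> n \<Longrightarrow> greedy n b lt P \<Gamma> i \<subseteq> vecs n"
proof (induction i)
  case 0 then show ?case unfolding vecs_def by simp
next
  case (Suc i)
  define C where "C = greedy n b lt P \<Gamma> i"
  define G where "G = {a \<in> Vsp b (Suc i) - Vsp b i. good P \<Gamma> C a}"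
  have IH: "C \<subseteq> vecs n" using Suc C_def by simp
  show ?case
  proof (cases "G = {}")
    case True
    then show ?thesis unfolding greedy_Suc_eq[of n b lt P \<Gamma> i] C_def[symmetric] G_def[symmetric]
      using IH by simp
  next
    case False
    define a where "a = (THE a. a \<in> G \<and> (\<forall>y\<in>G. y \<noteq> a \<longrightarrow> lexless n b lt a y))"
    have "a \<in> G" using the_min[OF B Suc.prems so _ False] unfolding a_def G_def by blast
    then have av: "a \<in> vecs n" using Vsp_vecs[OF B Suc.prems] unfolding G_def by blast
    have eq: "greedy n b lt P \<Gamma> (Suc i) = {vadd (vsmult r a) c | r c. c \<in> C}"
      unfolding greedy_Suc_eq[of n b lt P \<Gamma> i] C_def[symmetric] G_def[symmetric] a_def[symmetric]
      using False by simp
    show ?thesis unfolding eq using IH av unfolding vecs_def vadd_def vsmult_def by auto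
  qed
qed

lemma left_ideal_lprin: "left_ideal (lprin x)"
  unfolding left_ideal_def lprin_def
proof (intro conjI ballI allI)
  show "0 \<in> {r * x |r. True}" by (metis (mono_tags, lifting) mem_Collect_eq mult_zero_left)
next
  fix y z assume "y \<in> {r * x |r. True}" "z \<in> {r * x |r. True}"
  then obtain r s where "y = r * x" "z = s * x" by blast
  then have "y + z = (r + s) * x" by (simp add: distrib_right)
  then show "y + z \<in> {r * x |r. True}" by blast
next
  fix t y assume "y \<in> {r * x |r. True}"
  then obtain r where "y = r * x" by blast
  then have "t * y = (t * r) * x" by (simp add: mult.assoc)
  then show "t * y \<in> {r * x |r. True}" by blast
qed

lemma good_ext:
  fixes x :: "nat \<Rightarrow> 'a::{ring_1,finite}"
  assumes GS: "generator_system \<Gamma>" and LM: "left_multiplicative n P"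
    and Cv: "C \<subseteq> vecs n" and Cs: "submod C" and xv: "x \<in> vecs n"
    and g: "good P \<Gamma> C x" and \<beta>: "\<beta> \<noteq> 0" and c: "c \<in> C"
  shows "P (vadd (vsmult \<beta> x) c)"
proof -
  have "lprin \<beta> \<noteq> {0}" using lprin_self[of \<beta>] \<beta> by auto
  then obtain \<gamma> where \<gamma>: "\<gamma> \<in> \<Gamma>" "lprin \<gamma> = lprin \<beta>"
    using GS left_ideal_lprin[of \<beta>] unfolding generator_system_def by blast
  obtain u where u: "u \<in> units" "\<beta> = u * \<gamma>" using assoc_unit[of \<beta> \<gamma>] \<gamma>(2) by auto
  obtain v where uv: "u * v = 1" "v * u = 1" using u(1) unfolding units_def by blast
  have vc: "vsmult v c \<in> C" using Cs c unfolding submod_def by blast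
  have P1: "P (vadd (vsmult \<gamma> x) (vsmult v c))" using g \<gamma>(1) vc unfolding good_def by blast
  have wv: "vadd (vsmult \<gamma> x) (vsmult v c) \<in> vecs n"
    using xv Cv c unfolding vecs_def vadd_def vsmult_def by auto
  have eq: "vsmult u (vadd (vsmult \<gamma> x) (vsmult v c)) = vadd (vsmult \<beta> x) c"
    unfolding vadd_def vsmult_def u(2)
    by (simp add: distrib_left mult.assoc[symmetric] uv(1))
  have "P (vsmult u (vadd (vsmult \<gamma> x) (vsmult v c))) = P (vadd (vsmult \<gamma> x) (vsmult v c))"
    using LM u(1) wv unfolding left_multiplicative_def by blast
  then show ?thesis using P1 eq by simp
qed



lemma vi1: "vadd (vsmult g (vsmult al (vadd x (vsmult t a)))) c = vadd (vsmult (g*al) x) (vadd (vsmult (g*al*t) a) c)"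
  unfolding vadd_def vsmult_def by (rule ext) (simp add: algebra_simps)
lemma vi2: "vadd (vsmult g (vadd x (vsmult (-r) a))) c = vadd (vsmult g x) (vadd (vsmult (-(g*r)) a) c)"
  unfolding vadd_def vsmult_def by (rule ext) (simp add: algebra_simps)
lemma vi3: "vadd (vsmult r a) (vadd x (vsmult (-r) a)) = x"
  unfolding vadd_def vsmult_def by (rule ext) (simp add: algebra_simps)

lemma unit_nz: fixes al :: "'a::ring_1" assumes "al \<in> units" "w \<noteq> 0" shows "al * w \<noteq> 0" "w * al \<noteq> 0"
proof -
  obtain v where v: "al * v = 1" "v * al = 1" using assms(1) unfolding units_def by blast
  show "al * w \<noteq> 0"
  proof
    assume "al * w = 0" then have "v * (al * w) = 0" by simp
    then show False using v assms(2) by (simp add: mult.assoc[symmetric])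
  qed
  show "w * al \<noteq> 0"
  proof
    assume "w * al = 0" then have "(w * al) * v = 0" by simp
    then show False using v assms(2) by (simp add: mult.assoc)
  qed
qed

lemma one_unit: "1 \<in> units" unfolding units_def by auto

lemma step:
  fixes b :: "nat \<Rightarrow> nat \<Rightarrow> 'a::{ring_1,finite}" and x :: "nat \<Rightarrow> 'a"
  assumes PL: "principal_left_ideal_ring TYPE('a)" and RS: "respectful lt"
    and B: "is_basis n b" and LM: "left_multiplicative n P" and GS: "generator_system \<Gamma>"
    and i: "Suc i0 \<le> n"
    and IH: "\<And>j w. 1 \<le> j \<Longrightarrow> j \<le> i0 \<Longrightarrow> w \<in> Vsp b j - Vsp b (j - 1) \<Longrightarrow>
               good P \<Gamma> (greedy n b lt P \<Gamma> j) w \<Longrightarrow> w \<in> greedy n b lt P \<Gamma> j"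
    and x: "x \<in> Vsp b (Suc i0) - Vsp b i0"
    and gx: "good P \<Gamma> (greedy n b lt P \<Gamma> (Suc i0)) x"
  shows "x \<in> greedy n b lt P \<Gamma> (Suc i0)"
proof -
  have so: "strict_total_order lt" using RS unfolding respectful_def by blast
  have irr: "\<And>p. \<not> lt p p" and tr: "\<And>p q r. lt p q \<Longrightarrow> lt q r \<Longrightarrow> lt p r"
    using so unfolding strict_total_order_def by blast+
  define C0 where "C0 = greedy n b lt P \<Gamma> i0"
  define C1 where "C1 = greedy n b lt P \<Gamma> (Suc i0)"
  define G where "G = {a \<in> Vsp b (Suc i0) - Vsp b i0. good P \<Gamma> C0 a}"
  have Ceq: "C1 = (if G = {} then C0 else
     {vadd (vsmult r (THE a. a \<in> G \<and> (\<forall>y\<in>G. y \<noteq> a \<longrightarrow> lexless n b lt a y))) c | r c. c \<in> C0})"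
    unfolding C1_def G_def C0_def by (rule greedy_Suc_eq)
  have C01: "C0 \<subseteq> C1" unfolding C0_def C1_def by (rule greedy_mono_Suc)
  have gx1: "good P \<Gamma> C1 x" using gx C1_def by simp
  have gx0: "good P \<Gamma> C0 x" using gx1 C01 unfolding good_def by blast
  have xG: "x \<in> G" using x gx0 unfolding G_def by blast
  then have GnE: "G \<noteq> {}" by blast
  define a where "a = (THE a. a \<in> G \<and> (\<forall>y\<in>G. y \<noteq> a \<longrightarrow> lexless n b lt a y))"
  have GS': "G \<subseteq> Vsp b (Suc i0) - Vsp b i0" unfolding G_def by blast
  have amin: "a \<in> G \<and> (\<forall>y\<in>G. y \<noteq> a \<longrightarrow> lexless n b lt a y)"
    using the_min[OF B i so GS' GnE] unfolding a_def by blast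
  have C1eq: "C1 = {vadd (vsmult r a) c | r c. c \<in> C0}" using Ceq GnE unfolding a_def by simp
  have sub1: "submod C1" unfolding C1_def by (rule greedy_submod)
  have sub0: "submod C0" unfolding C0_def by (rule greedy_submod)
  have C1v: "C1 \<subseteq> vecs n" unfolding C1_def by (rule greedy_vecs[OF B so i])
  have z0: "(\<lambda>k. 0) \<in> C0" using sub0 unfolding submod_def by blast
  have "a = vadd (vsmult 1 a) (\<lambda>k. 0)" by (simp only: vsmult_one vadd_zero)
  then have aC1: "a \<in> C1" unfolding C1eq using z0 by blast
  have aV: "a \<in> Vsp b (Suc i0)" "a \<notin> Vsp b i0" using amin unfolding G_def by auto
  have xV: "x \<in> Vsp b (Suc i0)" "x \<notin> Vsp b i0" using x by auto
  have xv: "x \<in> vecs n" using Vsp_vecs[OF B i] xV by blast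
  define X where "X = coord n b x (Suc i0)"
  define Y where "Y = coord n b a (Suc i0)"
  have X0: "X \<noteq> 0" using top_zero_iff[OF B i xV(1)] xV(2) X_def by simp
  have Y0: "Y \<noteq> 0" using top_zero_iff[OF B i aV(1)] aV(2) Y_def by simp
  have sm1: "vsmult r v \<in> C1" if "v \<in> C1" for r v using sub1 that unfolding submod_def by blast
  have ad1: "vadd v w \<in> C1" if "v \<in> C1" "w \<in> C1" for v w using sub1 that unfolding submod_def by blast
  have XY: "X \<in> lprin Y"
  proof (rule ccontr)
    assume nX: "X \<notin> lprin Y"
    obtain t where t: "lprin Y \<subset> lprin (X + t * Y)" "X + t * Y \<noteq> 0"
      using coset_lemma[OF PL nX] by blast
    obtain al where al: "al \<in> units" "\<forall>u\<in>units. lt (al * (X + t * Y)) (u * Y)"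
      using RS t Y0 unfolding respectful_def by blast
    have lt1: "lt (al * (X + t * Y)) Y" using al(2) one_unit by force
    define z where "z = vsmult al (vadd x (vsmult t a))"
    have zV: "z \<in> Vsp b (Suc i0)" unfolding z_def
      by (intro Vsp_smult Vsp_add xV(1) aV(1))
    have zc: "coord n b z (Suc i0) = al * (X + t * Y)"
    proof -
      have ta: "vsmult t a \<in> Vsp b (Suc i0)" by (rule Vsp_smult[OF aV(1)])
      have xta: "vadd x (vsmult t a) \<in> Vsp b (Suc i0)" by (rule Vsp_add[OF xV(1) ta])
      show ?thesis unfolding z_def coord_smult[OF B i xta] coord_add[OF B i xV(1) ta]
          coord_smult[OF B i aV(1)] X_def Y_def ..
    qed
    have zc0: "al * (X + t * Y) \<noteq> 0" using unit_nz(1)[OF al(1) t(2)] .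
    have zV0: "z \<notin> Vsp b i0" using top_zero_iff[OF B i zV] zc zc0 by simp
    have zgood: "good P \<Gamma> C0 z" unfolding good_def
    proof (intro ballI)
      fix g c assume g: "g \<in> \<Gamma>" and c: "c \<in> C0"
      have g0: "g \<noteq> 0" using GS g unfolding generator_system_def by blast
      have ga0: "g * al \<noteq> 0" using unit_nz(2)[OF al(1) g0] .
      have d: "vadd (vsmult (g * al * t) a) c \<in> C1" using ad1[OF sm1[OF aC1]] c C01 by blast
      have "P (vadd (vsmult (g * al) x) (vadd (vsmult (g * al * t) a) c))"
        by (rule good_ext[OF GS LM C1v sub1 xv gx1 ga0 d])
      then show "P (vadd (vsmult g z) c)" unfolding z_def vi1 .
    qed
    have zG: "z \<in> G" unfolding G_def using zV zV0 zgood by blast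
    have cne: "coord n b a (Suc i0) \<noteq> coord n b z (Suc i0)"
      using lt1 irr zc Y_def by auto
    then have "a \<noteq> z" by auto
    then have "lexless n b lt a z" using amin zG by auto
    moreover have "a \<in> Vsp b (Suc i0) - Vsp b (Suc i0 - 1)" "z \<in> Vsp b (Suc i0) - Vsp b (Suc i0 - 1)"
      using aV zV zV0 by auto
    ultimately have "lt Y (al * (X + t * Y))"
      using lex_top[OF B _ i _ _ cne] zc Y_def by simp
    then show False using tr[OF lt1] irr by blast
  qed
  then obtain r where r: "X = r * Y" unfolding lprin_def by blast
  define w where "w = vadd x (vsmult (-r) a)"
  have ra: "vsmult (-r) a \<in> Vsp b (Suc i0)" by (rule Vsp_smult[OF aV(1)])
  have wV1: "w \<in> Vsp b (Suc i0)" unfolding w_def by (rule Vsp_add[OF xV(1) ra])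
  have "coord n b w (Suc i0) = X + (-r) * Y"
    unfolding w_def coord_add[OF B i xV(1) ra] coord_smult[OF B i aV(1)] X_def Y_def ..
  then have "coord n b w (Suc i0) = 0" using r by simp
  then have wV: "w \<in> Vsp b i0" using top_zero_iff[OF B i wV1] by simp
  have wgood: "good P \<Gamma> C1 w" unfolding good_def
  proof (intro ballI)
    fix g c assume g: "g \<in> \<Gamma>" and c: "c \<in> C1"
    have d: "vadd (vsmult (-(g * r)) a) c \<in> C1" using ad1[OF sm1[OF aC1] c] .
    have "P (vadd (vsmult g x) (vadd (vsmult (-(g * r)) a) c))" using gx1 g d unfolding good_def by blast
    then show "P (vadd (vsmult g w) c)" unfolding w_def vi2 .
  qed
  have wC0: "w \<in> C0"
  proof -
    consider "w = (\<lambda>k. 0)" | j where "j \<in> {1..i0}" "w \<in> Vsp b j - Vsp b (j - 1)"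
      using decompose[OF wV] by blast
    then show ?thesis
    proof cases
      case 1 then show ?thesis using z0 by simp
    next
      case 2
      have "greedy n b lt P \<Gamma> j \<subseteq> C1" unfolding C1_def by (rule greedy_mono) (use 2 in simp)
      then have "good P \<Gamma> (greedy n b lt P \<Gamma> j) w" using wgood unfolding good_def by blast
      then have "w \<in> greedy n b lt P \<Gamma> j" using IH 2 by simp
      moreover have "greedy n b lt P \<Gamma> j \<subseteq> C0" unfolding C0_def by (rule greedy_mono) (use 2 in simp)
      ultimately show ?thesis by blast
    qed
  qed
  have "x = vadd (vsmult r a) w" unfolding w_def vi3 ..
  then have "x \<in> C1" unfolding C1eq using wC0 by blast
  then show ?thesis unfolding C1_def .
qed

theorem mainTheorem7:
  fixes n :: nat
    and b :: "nat \<Rightarrow> nat \<Rightarrow> 'a::{ring_1, finite}"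
    and lt :: "'a \<Rightarrow> 'a \<Rightarrow> bool"
    and P :: "(nat \<Rightarrow> 'a) \<Rightarrow> bool"
    and \<Gamma> :: "'a set"
  assumes "principal_left_ideal_ring TYPE('a)"
    and "respectful lt"
    and "is_basis n b"
    and "left_multiplicative n P"
    and "generator_system \<Gamma>"
  shows "\<forall>i\<in>{1..n}. \<forall>x \<in> Vsp b i - Vsp b (i - 1).
           good P \<Gamma> (greedy n b lt P \<Gamma> i) x \<longrightarrow> x \<in> greedy n b lt P \<Gamma> i"
proof -
  have all: "1 \<le> i \<Longrightarrow> i \<le> n \<Longrightarrow> x \<in> Vsp b i - Vsp b (i - 1) \<Longrightarrow>
      good P \<Gamma> (greedy n b lt P \<Gamma> i) x \<Longrightarrow> x \<in> greedy n b lt P \<Gamma> i" for i x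
  proof (induction i arbitrary: x rule: less_induct)
    case (less i)
    obtain i0 where i0: "i = Suc i0" using less.prems(1) by (cases i) auto
    have IH: "\<And>j w. 1 \<le> j \<Longrightarrow> j \<le> i0 \<Longrightarrow> w \<in> Vsp b j - Vsp b (j - 1) \<Longrightarrow>
               good P \<Gamma> (greedy n b lt P \<Gamma> j) w \<Longrightarrow> w \<in> greedy n b lt P \<Gamma> j"
      using less.IH less.prems(2) i0 by simp
    show ?case unfolding i0
      by (rule step[OF assms _ IH]) (use less.prems i0 in simp_all)
  qed
  show ?thesis using all by auto
qed

end
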